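(* Let $\Lambda=kS_{(r,s)}/I$ be a quadratic monomial algebra on an $(r,s)$-star quiver with $\operatorname{Ext}^1_{\Lambda^e}(\Lambda,\Lambda^e)=0$. If $s\geq2$ and $a$ is an arrow with $h(a)=z$, then $|\mathcal Z_a|\leq s-1$. If $r\geq 2$ and $b$ is an arrow with $t(b)=z$, then $|\mathcal Z_b|\leq r-1$.
   Context: The $(r,s)$-star quiver $S_{(r,s)}$: central vertex $z$, $r$ arrows $a_i:i\to z$ from distinct vertices and $s$ arrows $b_j:z\to j$ to distinct vertices, nothing else. Quadratic monomial: $I$ admissible generated by paths of length $2$. For $a$ with $h(a)=z$, $\mathcal Z_a=\{b:z\to j\mid ba=0\}$; for $b$ with $t(b)=z$, $\mathcal Z_b=\{a:i\to z\mid ba=0\}$. $\Lambda^e=\Lambda\otimes_k\Lambda^{\mathrm{op}}$. *)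

theory Defs
  imports Main
begin

text \<open>The (r,s)-star quiver: central vertex VZ, sources VI i (i<r), sinks VO j (j<s),
  arrows A i : VI i -> VZ and B j : VZ -> VO j.  Paths of the quiver (there are none of
  length >= 3): trivial paths E v, arrows, and BA i j = b_j a_i (first a_i, then b_j).\<close>

datatype vert = VZ | VI nat | VO nat
datatype path = E vert | A nat | B nat | BA nat nat

fun src :: "path \<Rightarrow> vert" where
  "src (E v) = v" | "src (A i) = VI i" | "src (B j) = VZ" | "src (BA i j) = VI i"

fun tgt :: "path \<Rightarrow> vert" where
  "tgt (E v) = v" | "tgt (A i) = VZ" | "tgt (B j) = VO j" | "tgt (BA i j) = VO j"

text \<open>The quadratic monomial ideal I is given by a set Z of pairs (i,j): the generator
  b_j a_i lies in I iff (i,j) \<in> Z.  Basis of Lambda = k S_(r,s) / I: the paths not in I.\<close>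

definition paths :: "nat \<Rightarrow> nat \<Rightarrow> (nat \<times> nat) set \<Rightarrow> path set" where
  "paths r s Z = {E VZ} \<union> E ` VI ` {..<r} \<union> E ` VO ` {..<s} \<union> A ` {..<r} \<union> B ` {..<s}
     \<union> {BA i j | i j. i < r \<and> j < s \<and> (i, j) \<notin> Z}"

text \<open>Product of basis paths in Lambda: pmul Z p q = p q (q first, then p), None meaning 0.\<close>
definition pmul :: "(nat \<times> nat) set \<Rightarrow> path \<Rightarrow> path \<Rightarrow> path option" where
  "pmul Z p q = (if tgt q \<noteq> src p then None else
     (case p of E _ \<Rightarrow> Some q
      | _ \<Rightarrow> (case q of E _ \<Rightarrow> Some p
              | A i \<Rightarrow> (case p of B j \<Rightarrow> (if (i, j) \<in> Z then None else Some (BA i j)) | _ \<Rightarrow> None)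
              | _ \<Rightarrow> None)))"

definition lam :: "nat \<Rightarrow> nat \<Rightarrow> (nat \<times> nat) set \<Rightarrow> (path \<Rightarrow> 'k::field) set" where
  "lam r s Z = {x. \<forall>p. p \<notin> paths r s Z \<longrightarrow> x p = 0}"

definition lmul :: "nat \<Rightarrow> nat \<Rightarrow> (nat \<times> nat) set \<Rightarrow> (path \<Rightarrow> 'k::field) \<Rightarrow> (path \<Rightarrow> 'k) \<Rightarrow> (path \<Rightarrow> 'k)" where
  "lmul r s Z x y = (\<lambda>p. \<Sum>(p1, p2) \<in> {(p1, p2). p1 \<in> paths r s Z \<and> p2 \<in> paths r s Z \<and> pmul Z p1 p2 = Some p}.
      x p1 * y p2)"

text \<open>Elements of the enveloping algebra Lambda^e = Lambda \<otimes>_k Lambda^op, with basis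
  pairs (p,q) standing for p \<otimes> q.\<close>
definition lamE :: "nat \<Rightarrow> nat \<Rightarrow> (nat \<times> nat) set \<Rightarrow> (path \<times> path \<Rightarrow> 'k::field) set" where
  "lamE r s Z = {f. \<forall>p q. (p \<notin> paths r s Z \<or> q \<notin> paths r s Z) \<longrightarrow> f (p, q) = 0}"

text \<open>Lambda-bimodule structure of Lambda^e corresponding to its left regular Lambda^e-module
  structure: x (u \<otimes> v) y = (x u) \<otimes> (v y).\<close>
definition lact :: "nat \<Rightarrow> nat \<Rightarrow> (nat \<times> nat) set \<Rightarrow> (path \<Rightarrow> 'k::field) \<Rightarrow> (path \<times> path \<Rightarrow> 'k) \<Rightarrow> (path \<times> path \<Rightarrow> 'k)" where
  "lact r s Z x f = (\<lambda>(p, q). \<Sum>(p1, p2) \<in> {(p1, p2). p1 \<in> paths r s Z \<and> p2 \<in> paths r s Z \<and> pmul Z p1 p2 = Some p}.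
      x p1 * f (p2, q))"

definition ract :: "nat \<Rightarrow> nat \<Rightarrow> (nat \<times> nat) set \<Rightarrow> (path \<times> path \<Rightarrow> 'k::field) \<Rightarrow> (path \<Rightarrow> 'k) \<Rightarrow> (path \<times> path \<Rightarrow> 'k)" where
  "ract r s Z f y = (\<lambda>(p, q). \<Sum>(q1, q2) \<in> {(q1, q2). q1 \<in> paths r s Z \<and> q2 \<in> paths r s Z \<and> pmul Z q1 q2 = Some q}.
      f (p, q1) * y q2)"

definition is_derivation :: "nat \<Rightarrow> nat \<Rightarrow> (nat \<times> nat) set \<Rightarrow> ((path \<Rightarrow> 'k::field) \<Rightarrow> (path \<times> path \<Rightarrow> 'k)) \<Rightarrow> bool" where
  "is_derivation r s Z d \<longleftrightarrow>
     (\<forall>x \<in> lam r s Z. d x \<in> lamE r s Z) \<and>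
     (\<forall>x \<in> lam r s Z. \<forall>y \<in> lam r s Z. d (\<lambda>p. x p + y p) = (\<lambda>pq. d x pq + d y pq)) \<and>
     (\<forall>c. \<forall>x \<in> lam r s Z. d (\<lambda>p. c * x p) = (\<lambda>pq. c * d x pq)) \<and>
     (\<forall>x \<in> lam r s Z. \<forall>y \<in> lam r s Z.
        d (lmul r s Z x y) = (\<lambda>pq. lact r s Z x (d y) pq + ract r s Z (d x) y pq))"

definition is_inner_derivation :: "nat \<Rightarrow> nat \<Rightarrow> (nat \<times> nat) set \<Rightarrow> ((path \<Rightarrow> 'k::field) \<Rightarrow> (path \<times> path \<Rightarrow> 'k)) \<Rightarrow> bool" where
  "is_inner_derivation r s Z d \<longleftrightarrow>
     (\<exists>m \<in> lamE r s Z. \<forall>x \<in> lam r s Z. d x = (\<lambda>pq. lact r s Z x m pq - ract r s Z m x pq))"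

text \<open>Ext^1_{Lambda^e}(Lambda, Lambda^e) = HH^1(Lambda, Lambda^e) = Der / Inn vanishes, over the field 'k.\<close>
definition Ext1_vanishes :: "'k::field itself \<Rightarrow> nat \<Rightarrow> nat \<Rightarrow> (nat \<times> nat) set \<Rightarrow> bool" where
  "Ext1_vanishes _ r s Z \<longleftrightarrow>
     (\<forall>d :: (path \<Rightarrow> 'k) \<Rightarrow> (path \<times> path \<Rightarrow> 'k).
        is_derivation r s Z d \<longrightarrow> is_inner_derivation r s Z d)"

end

theory Submission imports Defs begin

lemma pmul_A: "pmul Z p1 p2 = Some (A i) \<longleftrightarrow> (p1 = E VZ \<and> p2 = A i) \<or> (p1 = A i \<and> p2 = E (VI i))"
  by (cases p1; cases p2) (auto simp: pmul_def split: path.splits if_splits)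

lemma pmul_B: "pmul Z p1 p2 = Some (B j) \<longleftrightarrow> (p1 = E (VO j) \<and> p2 = B j) \<or> (p1 = B j \<and> p2 = E VZ)"
  by (cases p1; cases p2) (auto simp: pmul_def split: path.splits if_splits)

lemma pmul_E: "pmul Z p1 p2 = Some (E v) \<longleftrightarrow> (p1 = E v \<and> p2 = E v)"
  by (cases p1; cases p2) (auto simp: pmul_def split: path.splits if_splits)

lemma in_paths_simps:
  "E VZ \<in> paths r s Z"
  "i < r \<Longrightarrow> E (VI i) \<in> paths r s Z"
  "j < s \<Longrightarrow> E (VO j) \<in> paths r s Z"
  "i < r \<Longrightarrow> A i \<in> paths r s Z"
  "j < s \<Longrightarrow> B j \<in> paths r s Z"
  by (auto simp: paths_def)

lemma S_A: "i < r \<Longrightarrow> {(p1,p2). p1 \<in> paths r s Z \<and> p2 \<in> paths r s Z \<and> pmul Z p1 p2 = Some (A i)} = {(E VZ, A i), (A i, E (VI i))}"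
  by (auto simp: pmul_A in_paths_simps)

lemma S_B: "j < s \<Longrightarrow> {(p1,p2). p1 \<in> paths r s Z \<and> p2 \<in> paths r s Z \<and> pmul Z p1 p2 = Some (B j)} = {(E (VO j), B j), (B j, E VZ)}"
  by (auto simp: pmul_B in_paths_simps)

lemma S_E: "E v \<in> paths r s Z \<Longrightarrow> {(p1,p2). p1 \<in> paths r s Z \<and> p2 \<in> paths r s Z \<and> pmul Z p1 p2 = Some (E v)} = {(E v, E v)}"
  by (auto simp: pmul_E)

definition d1 :: "nat \<Rightarrow> nat \<Rightarrow> (path \<Rightarrow> 'k::field) \<Rightarrow> (path \<times> path \<Rightarrow> 'k)" where
  "d1 i0 i x = (\<lambda>(p, q). if p = A i0 \<and> q = E (VI i) then x (A i) else 0)"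

definition d2 :: "nat \<Rightarrow> nat \<Rightarrow> (path \<Rightarrow> 'k::field) \<Rightarrow> (path \<times> path \<Rightarrow> 'k)" where
  "d2 j0 j x = (\<lambda>(p, q). if p = E (VO j) \<and> q = B j0 then x (B j) else 0)"

lemma d1_outer:
  assumes "i0 < r" "i < r" "i \<noteq> i0" "\<forall>j<s. (i0, j) \<in> Z"
  shows "is_derivation r s Z (d1 i0 i :: (path \<Rightarrow> 'k::field) \<Rightarrow> _)"
    "\<not> is_inner_derivation r s Z (d1 i0 i :: (path \<Rightarrow> 'k::field) \<Rightarrow> _)"
proof -
  show "is_derivation r s Z (d1 i0 i :: (path \<Rightarrow> 'k::field) \<Rightarrow> _)"
    unfolding is_derivation_def
  proof (intro conjI ballI allI)
    fix x :: "path \<Rightarrow> 'k" assume "x \<in> lam r s Z"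
    show "d1 i0 i x \<in> lamE r s Z" using assms by (auto simp: lamE_def d1_def in_paths_simps)
  next
    fix x y :: "path \<Rightarrow> 'k"
    show "d1 i0 i (\<lambda>p. x p + y p) = (\<lambda>pq. d1 i0 i x pq + d1 i0 i y pq)"
      by (auto simp: d1_def)
  next
    fix x :: "path \<Rightarrow> 'k" and c
    show "d1 i0 i (\<lambda>p. c * x p) = (\<lambda>pq. c * d1 i0 i x pq)"
      by (auto simp: d1_def)
  next
    fix x y :: "path \<Rightarrow> 'k"
    show "d1 i0 i (lmul r s Z x y) = (\<lambda>pq. lact r s Z x (d1 i0 i y) pq + ract r s Z (d1 i0 i x) y pq)"
    proof (rule ext, clarify)
      fix p q
      show "d1 i0 i (lmul r s Z x y) (p, q) = lact r s Z x (d1 i0 i y) (p, q) + ract r s Z (d1 i0 i x) y (p, q)"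
      proof (cases "p = A i0 \<and> q = E (VI i)")
        case True
        then show ?thesis using assms
          by (simp add: d1_def lmul_def lact_def ract_def S_A S_E in_paths_simps)
      next
        case False
        have l: "lact r s Z x (d1 i0 i y) (p, q) = 0"
          unfolding lact_def split_beta fst_conv snd_conv
        proof (rule sum.neutral, clarify)
          fix p1 p2 assume h: "p1 \<in> paths r s Z" "p2 \<in> paths r s Z" "pmul Z p1 p2 = Some p"
          show "x p1 * d1 i0 i y (p2, q) = 0"
          proof (cases "p2 = A i0 \<and> q = E (VI i)")
            case True
            then show ?thesis using h False assms
              by (cases p1) (auto simp: pmul_def paths_def split: if_splits)
          qed (auto simp: d1_def)
        qed
        have rr: "ract r s Z (d1 i0 i x) y (p, q) = 0"
          unfolding ract_def split_beta fst_conv snd_conv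
        proof (rule sum.neutral, clarify)
          fix q1 q2 assume h: "q1 \<in> paths r s Z" "q2 \<in> paths r s Z" "pmul Z q1 q2 = Some q"
          show "d1 i0 i x (p, q1) * y q2 = 0"
          proof (cases "p = A i0 \<and> q1 = E (VI i)")
            case True
            then show ?thesis using h False assms
              by (cases q2) (auto simp: pmul_def paths_def split: if_splits)
          qed (auto simp: d1_def)
        qed
        have "d1 i0 i (lmul r s Z x y) (p, q) = 0" using False unfolding d1_def by auto
        then show ?thesis using l rr by simp
      qed
    qed
  qed
  show "\<not> is_inner_derivation r s Z (d1 i0 i :: (path \<Rightarrow> 'k::field) \<Rightarrow> _)"
  proof
    assume "is_inner_derivation r s Z (d1 i0 i :: (path \<Rightarrow> 'k::field) \<Rightarrow> _)"
    then obtain m :: "path \<times> path \<Rightarrow> 'k" where m: "\<forall>x \<in> lam r s Z. d1 i0 i x = (\<lambda>pq. lact r s Z x m pq - ract r s Z m x pq)"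
      unfolding is_inner_derivation_def by blast
    define x :: "path \<Rightarrow> 'k" where "x = (\<lambda>p. if p = A i then 1 else 0)"
    have "x \<in> lam r s Z" using assms by (auto simp: x_def lam_def in_paths_simps)
    then have "d1 i0 i x (A i0, E (VI i)) = lact r s Z x m (A i0, E (VI i)) - ract r s Z m x (A i0, E (VI i))"
      using m by metis
    then show False using assms
      by (simp add: d1_def x_def lact_def ract_def S_A S_E in_paths_simps)
  qed
qed

lemma d2_outer:
  assumes "j0 < s" "j < s" "j \<noteq> j0" "\<forall>i<r. (i, j0) \<in> Z"
  shows "is_derivation r s Z (d2 j0 j :: (path \<Rightarrow> 'k::field) \<Rightarrow> _)"
    "\<not> is_inner_derivation r s Z (d2 j0 j :: (path \<Rightarrow> 'k::field) \<Rightarrow> _)"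
proof -
  show "is_derivation r s Z (d2 j0 j :: (path \<Rightarrow> 'k::field) \<Rightarrow> _)"
    unfolding is_derivation_def
  proof (intro conjI ballI allI)
    fix x :: "path \<Rightarrow> 'k" assume "x \<in> lam r s Z"
    show "d2 j0 j x \<in> lamE r s Z" using assms by (auto simp: lamE_def d2_def in_paths_simps)
  next
    fix x y :: "path \<Rightarrow> 'k"
    show "d2 j0 j (\<lambda>p. x p + y p) = (\<lambda>pq. d2 j0 j x pq + d2 j0 j y pq)"
      by (auto simp: d2_def)
  next
    fix x :: "path \<Rightarrow> 'k" and c
    show "d2 j0 j (\<lambda>p. c * x p) = (\<lambda>pq. c * d2 j0 j x pq)"
      by (auto simp: d2_def)
  next
    fix x y :: "path \<Rightarrow> 'k"
    show "d2 j0 j (lmul r s Z x y) = (\<lambda>pq. lact r s Z x (d2 j0 j y) pq + ract r s Z (d2 j0 j x) y pq)"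
    proof (rule ext, clarify)
      fix p q
      show "d2 j0 j (lmul r s Z x y) (p, q) = lact r s Z x (d2 j0 j y) (p, q) + ract r s Z (d2 j0 j x) y (p, q)"
      proof (cases "p = E (VO j) \<and> q = B j0")
        case True
        then show ?thesis using assms
          by (simp add: d2_def lmul_def lact_def ract_def S_B S_E in_paths_simps)
      next
        case False
        have l: "lact r s Z x (d2 j0 j y) (p, q) = 0"
          unfolding lact_def split_beta fst_conv snd_conv
        proof (rule sum.neutral, clarify)
          fix p1 p2 assume h: "p1 \<in> paths r s Z" "p2 \<in> paths r s Z" "pmul Z p1 p2 = Some p"
          show "x p1 * d2 j0 j y (p2, q) = 0"
          proof (cases "p2 = E (VO j) \<and> q = B j0")
            case True
            then show ?thesis using h False assms
              by (cases p1) (auto simp: pmul_def paths_def split: if_splits)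
          qed (auto simp: d2_def)
        qed
        have rr: "ract r s Z (d2 j0 j x) y (p, q) = 0"
          unfolding ract_def split_beta fst_conv snd_conv
        proof (rule sum.neutral, clarify)
          fix q1 q2 assume h: "q1 \<in> paths r s Z" "q2 \<in> paths r s Z" "pmul Z q1 q2 = Some q"
          show "d2 j0 j x (p, q1) * y q2 = 0"
          proof (cases "p = E (VO j) \<and> q1 = B j0")
            case True
            then show ?thesis using h False assms
              by (cases q2) (auto simp: pmul_def paths_def split: if_splits)
          qed (auto simp: d2_def)
        qed
        have "d2 j0 j (lmul r s Z x y) (p, q) = 0" using False unfolding d2_def by auto
        then show ?thesis using l rr by simp
      qed
    qed
  qed
  show "\<not> is_inner_derivation r s Z (d2 j0 j :: (path \<Rightarrow> 'k::field) \<Rightarrow> _)"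
  proof
    assume "is_inner_derivation r s Z (d2 j0 j :: (path \<Rightarrow> 'k::field) \<Rightarrow> _)"
    then obtain m :: "path \<times> path \<Rightarrow> 'k" where m: "\<forall>x \<in> lam r s Z. d2 j0 j x = (\<lambda>pq. lact r s Z x m pq - ract r s Z m x pq)"
      unfolding is_inner_derivation_def by blast
    define x :: "path \<Rightarrow> 'k" where "x = (\<lambda>p. if p = B j then 1 else 0)"
    have "x \<in> lam r s Z" using assms by (auto simp: x_def lam_def in_paths_simps)
    then have "d2 j0 j x (E (VO j), B j0) = lact r s Z x m (E (VO j), B j0) - ract r s Z m x (E (VO j), B j0)"
      using m by metis
    then show False using assms
      by (simp add: d2_def x_def lact_def ract_def S_B S_E in_paths_simps)
  qed
qed

lemma card_full:
  assumes "card {j. j < (s::nat) \<and> P j} > s - 1" "s \<ge> 1"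
  shows "\<forall>j<s. P j"
proof -
  have sub: "{j. j < s \<and> P j} \<subseteq> {..<s}" by auto
  have "card {j. j < s \<and> P j} \<le> s" using card_mono[OF _ sub] by simp
  then have "card {j. j < s \<and> P j} = card {..<s}" using assms by simp
  then have "{j. j < s \<and> P j} = {..<s}" using card_subset_eq[OF _ sub] by simp
  then show ?thesis by blast
qed

theorem mainTheorem16:
  fixes r s :: nat and Z :: "(nat \<times> nat) set"
  assumes "Z \<subseteq> {..<r} \<times> {..<s}"
    and "Ext1_vanishes TYPE('k::field) r s Z"
  shows "(s \<ge> 2 \<longrightarrow> (\<forall>i < r. card {j. j < s \<and> (i, j) \<in> Z} \<le> s - 1)) \<and>
         (r \<ge> 2 \<longrightarrow> (\<forall>j < s. card {i. i < r \<and> (i, j) \<in> Z} \<le> r - 1))"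
proof -
  have E: "\<And>d :: (path \<Rightarrow> 'k) \<Rightarrow> (path \<times> path \<Rightarrow> 'k). is_derivation r s Z d \<Longrightarrow> is_inner_derivation r s Z d"
    using assms(2) unfolding Ext1_vanishes_def by blast
  have no1: False if "i0 < r" "i < r" "i \<noteq> i0" "\<forall>j<s. (i0, j) \<in> Z" for i0 i
    using d1_outer[OF that, where 'k='k] E by blast
  have no2: False if "j0 < s" "j < s" "j \<noteq> j0" "\<forall>i<r. (i, j0) \<in> Z" for j0 j
    using d2_outer[OF that, where 'k='k] E by blast
  show ?thesis
  proof (intro conjI impI allI)
    fix i0 assume s2: "s \<ge> 2" and i0: "i0 < r"
    show "card {j. j < s \<and> (i0, j) \<in> Z} \<le> s - 1"
    proof (rule ccontr)
      assume "\<not> ?thesis"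
      then have "card {j. j < s \<and> (i0, j) \<in> Z} > s - 1" by simp
      then have full: "\<forall>j<s. (i0, j) \<in> Z" by (rule card_full) (use s2 in simp)
      show False
      proof (cases "r \<ge> 2")
        case True
        show False
        proof (cases "i0 = 0")
          case True
          show False by (rule no1[of i0 1]) (use True i0 full \<open>r \<ge> 2\<close> in auto)
        next
          case False
          show False by (rule no1[of i0 0]) (use False i0 full in auto)
        qed
      next
        case False
        then have "r = 1" "i0 = 0" using i0 by auto
        have f2: "\<forall>i<r. (i, 0) \<in> Z" using \<open>r = 1\<close> \<open>i0 = 0\<close> full s2 by simp
        show False by (rule no2[OF _ _ _ f2, of 1]) (use s2 in auto)
      qed
    qed
  next
    fix j0 assume r2: "r \<ge> 2" and j0: "j0 < s"
    show "card {i. i < r \<and> (i, j0) \<in> Z} \<le> r - 1"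
    proof (rule ccontr)
      assume "\<not> ?thesis"
      then have "card {i. i < r \<and> (i, j0) \<in> Z} > r - 1" by simp
      then have full: "\<forall>i<r. (i, j0) \<in> Z" by (rule card_full) (use r2 in simp)
      show False
      proof (cases "s \<ge> 2")
        case True
        show False
        proof (cases "j0 = 0")
          case True
          show False by (rule no2[of j0 1]) (use True j0 full \<open>s \<ge> 2\<close> in auto)
        next
          case False
          show False by (rule no2[of j0 0]) (use False j0 full in auto)
        qed
      next
        case False
        then have "s = 1" "j0 = 0" using j0 by auto
        have f2: "\<forall>j<s. (0, j) \<in> Z" using \<open>s = 1\<close> \<open>j0 = 0\<close> full r2 by simp
        show False by (rule no1[OF _ _ _ f2, of 1]) (use r2 in auto)
      qed
    qed
  qed
qed

end
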